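(* In qubit quantum theory, let $M=\hat n\cdot\vec\sigma$ and $M'=\hat n'\cdot\vec\sigma$ be the $\pm1$-valued projective measurements along unit Bloch vectors $\hat n,\hat n'\in\mathbb{R}^3$, where $\vec\sigma=(\sigma_x,\sigma_y,\sigma_z)$ are the Pauli matrices. Then every qubit state (density operator) satisfies the $A_1^2$-orbit-realizability condition relative to $M$ and $M'$ if and only if $\hat n\cdot\hat n'=0$.
   Context: For a qubit density operator $\rho$ and a $\pm1$-valued observable $M$, $\langle M\rangle_\rho=\mathrm{tr}(M\rho)$. A state $\rho_1$ satisfies the $A_1^2$-orbit-realizability condition relative to $M,M'$ if there exist qubit density operators $\rho_2,\rho_3,\rho_4$ with $\langle M\rangle_{\rho_1}=\langle M\rangle_{\rho_2}=-\langle M\rangle_{\rho_3}=-\langle M\rangle_{\rho_4}$, $\langle M'\rangle_{\rho_1}=-\langle M'\rangle_{\rho_2}=-\langle M'\rangle_{\rho_3}=\langle M'\rangle_{\rho_4}$, and $\tfrac12\rho_1+\tfrac12\rho_3=\tfrac12\rho_2+\tfrac12\rho_4$. *)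

theory Defs
  imports "HOL-Analysis.Analysis"
begin

type_synonym qop = "complex^2^2"

definition sigma_x :: qop where
  "sigma_x = (\<chi> i j. if i \<noteq> j then 1 else 0)"

definition sigma_y :: qop where
  "sigma_y = (\<chi> i j. if i = 1 \<and> j = 2 then - \<i> else if i = 2 \<and> j = 1 then \<i> else 0)"

definition sigma_z :: qop where
  "sigma_z = (\<chi> i j. if i = j then (if i = 1 then 1 else -1) else 0)"

definition bloch_obs :: "real^3 \<Rightarrow> qop" where
  "bloch_obs n = (\<chi> i j. complex_of_real (n$1) * sigma_x$i$j
                        + complex_of_real (n$2) * sigma_y$i$j
                        + complex_of_real (n$3) * sigma_z$i$j)"

definition qtrace :: "qop \<Rightarrow> complex" where
  "qtrace A = (\<Sum>i\<in>UNIV. A$i$i)"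

definition hermitian :: "qop \<Rightarrow> bool" where
  "hermitian A \<longleftrightarrow> (\<forall>i j. A$i$j = cnj (A$j$i))"

definition psd :: "qop \<Rightarrow> bool" where
  "psd A \<longleftrightarrow> (\<forall>v::complex^2. let q = (\<Sum>i\<in>UNIV. \<Sum>j\<in>UNIV. cnj (v$i) * A$i$j * v$j)
                               in Im q = 0 \<and> Re q \<ge> 0)"

definition qubit_state :: "qop \<Rightarrow> bool" where
  "qubit_state \<rho> \<longleftrightarrow> hermitian \<rho> \<and> psd \<rho> \<and> qtrace \<rho> = 1"

definition expect :: "qop \<Rightarrow> qop \<Rightarrow> complex" where
  "expect M \<rho> = qtrace (M ** \<rho>)"

definition A12_orbit_realizable :: "qop \<Rightarrow> qop \<Rightarrow> qop \<Rightarrow> bool" where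
  "A12_orbit_realizable M M' \<rho>1 \<longleftrightarrow>
     (\<exists>\<rho>2 \<rho>3 \<rho>4. qubit_state \<rho>2 \<and> qubit_state \<rho>3 \<and> qubit_state \<rho>4 \<and>
        expect M \<rho>1 = expect M \<rho>2 \<and> expect M \<rho>2 = - expect M \<rho>3 \<and> - expect M \<rho>3 = - expect M \<rho>4 \<and>
        expect M' \<rho>1 = - expect M' \<rho>2 \<and> - expect M' \<rho>2 = - expect M' \<rho>3 \<and> - expect M' \<rho>3 = expect M' \<rho>4 \<and>
        (1/2) *\<^sub>R \<rho>1 + (1/2) *\<^sub>R \<rho>3 = (1/2) *\<^sub>R \<rho>2 + (1/2) *\<^sub>R \<rho>4)"

end

theory Submission
  imports Defs
begin

definition bst :: "real^3 \<Rightarrow> qop" where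
  "bst r = (\<chi> i j. if i = 1 then (if j = 1 then complex_of_real ((1 + r$3)/2)
       else (complex_of_real (r$1) - \<i> * complex_of_real (r$2))/2)
     else (if j = 1 then (complex_of_real (r$1) + \<i> * complex_of_real (r$2))/2
       else complex_of_real ((1 - r$3)/2)))"

lemma bst_nth: "bst r $ 1 $ 1 = complex_of_real ((1 + r$3)/2)"
  "bst r $ 1 $ 2 = (complex_of_real (r$1) - \<i> * complex_of_real (r$2))/2"
  "bst r $ 2 $ 1 = (complex_of_real (r$1) + \<i> * complex_of_real (r$2))/2"
  "bst r $ 2 $ 2 = complex_of_real ((1 - r$3)/2)"
  by (simp_all add: bst_def)

lemma inner3: "(x::real^3) \<bullet> y = x$1*y$1 + x$2*y$2 + x$3*y$3"
  by (simp add: inner_vec_def sum_3)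

lemma expect_bst: "expect (bloch_obs n) (bst r) = complex_of_real (n \<bullet> r)"
  by (simp add: expect_def qtrace_def matrix_matrix_mult_def sum_2 bloch_obs_def
     sigma_x_def sigma_y_def sigma_z_def bst_nth inner3 complex_eq_iff field_simps)

lemma psd_form: "psd A \<Longrightarrow> 0 \<le> Re (cnj v1 * A$1$1 * v1 + cnj v1 * A$1$2 * v2 + cnj v2 * A$2$1 * v1 + cnj v2 * A$2$2 * v2)"
proof -
  assume "psd A"
  then have "let q = (\<Sum>i\<in>UNIV. \<Sum>j\<in>UNIV. cnj ((\<chi> k. if k = 1 then v1 else v2)$i) * A$i$j * (\<chi> k. if k = 1 then v1 else v2)$j)
                               in Im q = 0 \<and> Re q \<ge> 0" unfolding psd_def by blast
  then show ?thesis by (simp add: sum_2 Let_def)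
qed

lemma psd_key:
  fixes p q wr wi :: real
  assumes "0 \<le> p" "0 \<le> q" "p + q = 1" "wr^2 + wi^2 \<le> p*q"
  shows "0 \<le> p*(a^2+b^2) + q*(c^2+d^2) + 2*(wr*(a*c+b*d) + - wi*(a*d - b*c))"
proof -
  let ?Q = "p*(a^2+b^2) + q*(c^2+d^2) + 2*(wr*(a*c+b*d) + - wi*(a*d - b*c))"
  have e1: "p * ?Q = (p*a + wr*c - wi*d)^2 + (p*b + wr*d + wi*c)^2 + (p*q - wr^2 - wi^2)*(c^2+d^2)"
    by (simp add: power2_eq_square algebra_simps)
  have e2: "q * ?Q = (q*c + wr*a + wi*b)^2 + (q*d + wr*b - wi*a)^2 + (p*q - wr^2 - wi^2)*(a^2+b^2)"
    by (simp add: power2_eq_square algebra_simps)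
  have "0 \<le> p * ?Q" unfolding e1 using assms by (intro add_nonneg_nonneg mult_nonneg_nonneg) auto
  moreover have "0 \<le> q * ?Q" unfolding e2 using assms by (intro add_nonneg_nonneg mult_nonneg_nonneg) auto
  ultimately have "0 \<le> (p+q) * ?Q" by (simp add: distrib_right)
  then show ?thesis using assms by simp
qed

lemma norm3: "(norm (r::real^3))^2 = (r$1)^2 + (r$2)^2 + (r$3)^2"
  unfolding power2_norm_eq_inner inner3 by (simp add: power2_eq_square)

lemma bst_state:
  assumes "norm r \<le> 1"
  shows "qubit_state (bst r)"
proof -
  have n: "(r$1)^2 + (r$2)^2 + (r$3)^2 \<le> 1"
    using assms norm3[of r] by (metis norm_ge_zero power_le_one)
  have z: "(r$3)^2 \<le> 1" using n by (smt (verit) zero_le_power2)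
  hence zb: "\<bar>r$3\<bar> \<le> 1" by (simp add: abs_square_le_1)
  have H: "hermitian (bst r)"
    unfolding hermitian_def by (simp add: forall_2 bst_nth complex_eq_iff)
  have T: "qtrace (bst r) = 1"
    unfolding qtrace_def by (simp add: sum_2 bst_nth complex_eq_iff field_simps)
  have P: "psd (bst r)"
    unfolding psd_def Let_def
  proof
    fix v :: "complex^2"
    define a where "a = Re (v$1)"
    define b where "b = Im (v$1)"
    define c where "c = Re (v$2)"
    define d where "d = Im (v$2)"
    have k: "0 \<le> ((1 + r$3)/2)*(a^2+b^2) + ((1 - r$3)/2)*(c^2+d^2) + 2*((r$1/2)*(a*c+b*d) - (-(r$2)/2)*(a*d - b*c))"
    proof -
      have h1: "0 \<le> (1 + r$3)/2" "0 \<le> (1 - r$3)/2" "(1 + r$3)/2 + (1 - r$3)/2 = 1"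
        using zb by (auto simp: field_simps)
      have h2: "(r$1/2)^2 + (-(r$2)/2)^2 \<le> (1 + r$3)/2 * ((1 - r$3)/2)"
        using n by (simp add: power2_eq_square field_simps)
      show ?thesis using psd_key[OF h1 h2, of a b c d] by simp
    qed
    show "Im (\<Sum>i\<in>UNIV. \<Sum>j\<in>UNIV. cnj (v $ i) * bst r $ i $ j * v $ j) = 0 \<and>
        0 \<le> Re (\<Sum>i\<in>UNIV. \<Sum>j\<in>UNIV. cnj (v $ i) * bst r $ i $ j * v $ j)"
    proof
      show "Im (\<Sum>i\<in>UNIV. \<Sum>j\<in>UNIV. cnj (v $ i) * bst r $ i $ j * v $ j) = 0"
        by (simp add: sum_2 bst_nth field_simps)
      have "Re (\<Sum>i\<in>UNIV. \<Sum>j\<in>UNIV. cnj (v $ i) * bst r $ i $ j * v $ j) =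
         ((1 + r$3)/2)*(a^2+b^2) + ((1 - r$3)/2)*(c^2+d^2) + 2*((r$1/2)*(a*c+b*d) - (-(r$2)/2)*(a*d - b*c))"
        unfolding a_def b_def c_def d_def
        by (simp add: sum_2 bst_nth field_simps power2_eq_square)
      then show "0 \<le> Re (\<Sum>i\<in>UNIV. \<Sum>j\<in>UNIV. cnj (v $ i) * bst r $ i $ j * v $ j)"
        using k by simp
    qed
  qed
  show ?thesis using H T P by (simp add: qubit_state_def)
qed

lemma state_bst:
  assumes "qubit_state \<rho>"
  shows "\<exists>r. norm r \<le> 1 \<and> \<rho> = bst r"
proof -
  have H: "hermitian \<rho>" and P: "psd \<rho>" and T: "qtrace \<rho> = 1"
    using assms by (auto simp: qubit_state_def)
  define p where "p = Re (\<rho>$1$1)"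
  define q where "q = Re (\<rho>$2$2)"
  define wr where "wr = Re (\<rho>$1$2)"
  define wi where "wi = Im (\<rho>$1$2)"
  have h11: "\<rho>$1$1 = complex_of_real p"
    proof -
    have "\<rho>$1$1 = cnj (\<rho>$1$1)" using H unfolding hermitian_def by blast
    then show ?thesis unfolding p_def by (simp add: complex_eq_iff)
  qed
  have h22: "\<rho>$2$2 = complex_of_real q"
    proof -
    have "\<rho>$2$2 = cnj (\<rho>$2$2)" using H unfolding hermitian_def by blast
    then show ?thesis unfolding q_def by (simp add: complex_eq_iff)
  qed
  have h12: "\<rho>$1$2 = Complex wr wi" by (simp add: wr_def wi_def)
  have h21: "\<rho>$2$1 = Complex wr (-wi)"
    proof -
    have "\<rho>$2$1 = cnj (\<rho>$1$2)" using H unfolding hermitian_def by blast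
    then show ?thesis unfolding wr_def wi_def by (simp add: complex_eq_iff)
  qed
  have pq: "p + q = 1" using T unfolding qtrace_def
    by (simp add: sum_2 h11 h22 complex_eq_iff)
  have Q: "\<And>v1 v2. 0 \<le> Re (cnj v1 * \<rho>$1$1 * v1 + cnj v1 * \<rho>$1$2 * v2 + cnj v2 * \<rho>$2$1 * v1 + cnj v2 * \<rho>$2$2 * v2)"
    using psd_form[OF P] by blast
  have p0: "0 \<le> p" using Q[of 1 0] by (simp add: h11)
  have q0: "0 \<le> q" using Q[of 0 1] by (simp add: h22)
  have a1: "0 \<le> p * (p*q - wr^2 - wi^2)"
    using Q[of "- Complex wr wi" "complex_of_real p"]
    by (simp add: h11 h12 h21 h22 power2_eq_square algebra_simps)
  have a2: "0 \<le> q * (p*q - wr^2 - wi^2)"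
    using Q[of "complex_of_real q" "- Complex wr (-wi)"]
    by (simp add: h11 h12 h21 h22 power2_eq_square algebra_simps)
  have a3: "wr^2 + wi^2 \<le> p*q"
    using add_nonneg_nonneg[OF a1 a2] pq by (simp add: distrib_right[symmetric])
  define r :: "real^3" where "r = (\<chi> k. if k = 1 then 2*wr else if k = 2 then -2*wi else p - q)"
  have r1: "r$1 = 2*wr" and r2: "r$2 = -2*wi" and r3: "r$3 = p - q"
    by (simp_all add: r_def)
  have "(norm r)^2 \<le> 1"
  proof -
    have "(norm r)^2 = 4*(wr^2+wi^2) + (p-q)^2" unfolding norm3 r1 r2 r3 by (simp add: power2_eq_square)
    also have "\<dots> \<le> 4*(p*q) + (p-q)^2" using a3 by simp
    also have "\<dots> = (p+q)^2" by (simp add: power2_eq_square algebra_simps)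
    finally show ?thesis using pq by simp
  qed
  hence "norm r \<le> 1" by (simp add: power_le_one_iff abs_square_le_1)
  moreover have "\<rho> = bst r"
    unfolding vec_eq_iff forall_2
    by (simp add: bst_nth r1 r2 r3 h11 h12 h21 h22 complex_eq_iff field_simps)
       (use pq in \<open>simp add: algebra_simps\<close>)?
  ultimately show ?thesis by blast
qed

lemma bst_affine:
  assumes "r1 + r3 = r2 + r4"
  shows "(1/2) *\<^sub>R bst r1 + (1/2) *\<^sub>R bst r3 = (1/2) *\<^sub>R bst r2 + (1/2) *\<^sub>R bst r4"
proof -
  have c: "r1$k + r3$k = r2$k + r4$k" for k using assms by (metis vector_add_component)
  have c1: "r1$1 = r2$1 + r4$1 - r3$1" and c2: "r1$2 = r2$2 + r4$2 - r3$2" and c3: "r1$3 = r2$3 + r4$3 - r3$3"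
    using c[of 1] c[of 2] c[of 3] by linarith+
  show ?thesis
    unfolding vec_eq_iff forall_2
    by (simp add: bst_nth c1 c2 c3 complex_eq_iff field_simps scaleR_conv_of_real)
qed

lemma sq_eq_zero: "norm (x::real^3) \<le> 1 \<Longrightarrow> norm y = 1 \<Longrightarrow> y \<bullet> x = 1 \<Longrightarrow> x = y"
proof -
  assume a: "norm x \<le> 1" "norm y = 1" "y \<bullet> x = 1"
  have "(norm (x - y))^2 = x \<bullet> x - 2 * (y \<bullet> x) + y \<bullet> y"
    by (simp add: power2_norm_eq_inner inner_diff inner_commute)
  also have "\<dots> = (norm x)^2 - 1" using a by (simp add: power2_norm_eq_inner[symmetric])
  also have "\<dots> \<le> 0" using a by (simp add: power_le_one)
  finally show "x = y" by simp
qed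

theorem mainTheorem3:
  fixes n n' :: "real^3"
  assumes "norm n = 1" and "norm n' = 1"
  shows "(\<forall>\<rho>1. qubit_state \<rho>1 \<longrightarrow> A12_orbit_realizable (bloch_obs n) (bloch_obs n') \<rho>1)
         \<longleftrightarrow> n \<bullet> n' = 0"
proof
  assume L: "\<forall>\<rho>1. qubit_state \<rho>1 \<longrightarrow> A12_orbit_realizable (bloch_obs n) (bloch_obs n') \<rho>1"
  have "qubit_state (bst n)" using assms by (intro bst_state) simp
  with L obtain \<rho>2 \<rho>3 \<rho>4 where s2: "qubit_state \<rho>2"
    and e1: "expect (bloch_obs n) (bst n) = expect (bloch_obs n) \<rho>2"
    and e2: "expect (bloch_obs n') (bst n) = - expect (bloch_obs n') \<rho>2"
    unfolding A12_orbit_realizable_def by blast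
  obtain r2 where r2: "norm r2 \<le> 1" "\<rho>2 = bst r2" using state_bst[OF s2] by blast
  have nn: "n \<bullet> n = 1" using assms by (simp add: power2_norm_eq_inner[symmetric])
  have "n \<bullet> r2 = 1" using e1 nn by (simp add: r2 expect_bst)
  hence "r2 = n" using sq_eq_zero r2(1) assms(1) by blast
  then show "n \<bullet> n' = 0" using e2 by (simp add: r2 expect_bst inner_commute)
next
  assume O: "n \<bullet> n' = 0"
  show "\<forall>\<rho>1. qubit_state \<rho>1 \<longrightarrow> A12_orbit_realizable (bloch_obs n) (bloch_obs n') \<rho>1"
  proof (intro allI impI)
    fix \<rho>1 assume s1: "qubit_state \<rho>1"
    obtain r1 where r1: "norm r1 \<le> 1" "\<rho>1 = bst r1" using state_bst[OF s1] by blast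
    define a where "a = n \<bullet> r1"
    define b where "b = n' \<bullet> r1"
    define r2 where "r2 = r1 - (2*b) *\<^sub>R n'"
    define r3 where "r3 = r1 - (2*a) *\<^sub>R n - (2*b) *\<^sub>R n'"
    define r4 where "r4 = r1 - (2*a) *\<^sub>R n"
    have nn: "n \<bullet> n = 1" "n' \<bullet> n' = 1" using assms by (simp_all add: power2_norm_eq_inner[symmetric])
    have O': "n' \<bullet> n = 0" using O by (simp add: inner_commute)
    have i2: "n \<bullet> r2 = a" "n' \<bullet> r2 = -b" unfolding r2_def a_def b_def
      using nn O O' by (simp_all add: inner_diff_right)
    have i3: "n \<bullet> r3 = -a" "n' \<bullet> r3 = -b" unfolding r3_def a_def b_def
      using nn O O' by (simp_all add: inner_diff_right)
    have i4: "n \<bullet> r4 = -a" "n' \<bullet> r4 = b" unfolding r4_def a_def b_def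
      using nn O O' by (simp_all add: inner_diff_right)
    have "r2 \<bullet> r2 = r1 \<bullet> r1" "r3 \<bullet> r3 = r1 \<bullet> r1" "r4 \<bullet> r4 = r1 \<bullet> r1"
      unfolding r2_def r3_def r4_def a_def b_def
      using nn O O' by (simp_all add: inner_diff_left inner_diff_right inner_commute algebra_simps)
    hence nr: "norm r2 = norm r1" "norm r3 = norm r1" "norm r4 = norm r1"
      by (simp_all add: norm_eq_sqrt_inner)
    have aff: "r1 + r3 = r2 + r4" unfolding r2_def r3_def r4_def by (simp add: algebra_simps)
    show "A12_orbit_realizable (bloch_obs n) (bloch_obs n') \<rho>1"
      unfolding A12_orbit_realizable_def
      apply (rule exI[of _ "bst r2"], rule exI[of _ "bst r3"], rule exI[of _ "bst r4"])
      using bst_state[of r2] bst_state[of r3] bst_state[of r4] nr r1 bst_affine[OF aff] i2 i3 i4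
      by (simp add: expect_bst a_def b_def)
  qed
qed

end
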